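(* Let $p$ be a positive integer and consider the $\delta_{p,2}$-filtration of $A_1(\mathbf{C})$ (weights $\Lambda(i,j)=pi+2j$). Let $L$ be a nonzero operator in $A_1(\mathbf{C})$ whose symbol is $\sigma(L)=(\xi^p+\chi^2)^2$. If $M\neq0$ lies in the centralizer of $L$ in $A_1(\mathbf{C})$, then $\mathrm{ord}(M)\equiv 0$ or $\mathrm{ord}(M)\equiv p \pmod{2p}$.
   Context: $A_1(\mathbf{C})$ is the first Weyl algebra of operators $P=\sum a_{ij}x^i\partial^j$, $[\partial,x]=1$; $\mathrm{ord}(P)$ is the degree in $\partial$. With $\Lambda(i,j)=pi+2j$, $\delta(P)=\max\{\Lambda(i,j):a_{ij}\neq0\}$ and the symbol is $\sigma(P)=\sum_{\Lambda(i,j)=\delta(P)}a_{ij}\chi^i\xi^j\in\mathbf{C}[\chi,\xi]$. *)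

theory Defs
  imports Complex_Main
begin

text \<open>Elements of the first Weyl algebra A_1(C) in normal form
  P = sum a_ij x^i d^j, represented by their coefficient functions
  (i,j) |-> a_ij, required to have finite support.\<close>

type_synonym weyl = "nat \<times> nat \<Rightarrow> complex"

definition wsupp :: "weyl \<Rightarrow> (nat \<times> nat) set" where
  "wsupp P = {ij. P ij \<noteq> 0}"

definition weyl_elem :: "weyl \<Rightarrow> bool" where
  "weyl_elem P \<longleftrightarrow> finite (wsupp P)"

text \<open>Product using [d,x]=1, i.e.
  (x^i d^j)(x^k d^l) = sum_t C(j,t) C(k,t) t! x^(i+k-t) d^(j+l-t).\<close>

definition weyl_mult :: "weyl \<Rightarrow> weyl \<Rightarrow> weyl" where
  "weyl_mult P Q = (\<lambda>(a, b).
     \<Sum>(ij, kl) \<in> wsupp P \<times> wsupp Q.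
       \<Sum>t \<in> {..min (snd ij) (fst kl)}.
         (if fst ij + fst kl - t = a \<and> snd ij + snd kl - t = b
          then P ij * Q kl * of_nat (snd ij choose t) * of_nat (fst kl choose t)
               * of_nat (fact t)
          else 0))"

definition ord :: "weyl \<Rightarrow> nat" where
  "ord P = Max (snd ` wsupp P)"

definition Lam :: "nat \<Rightarrow> nat \<times> nat \<Rightarrow> nat" where
  "Lam p ij = p * fst ij + 2 * snd ij"

definition delta :: "nat \<Rightarrow> weyl \<Rightarrow> nat" where
  "delta p P = Max (Lam p ` wsupp P)"

text \<open>The symbol, as coefficient function of a polynomial in C[chi,xi]:
  (i,j) |-> coefficient of chi^i xi^j.\<close>
definition symbol :: "nat \<Rightarrow> weyl \<Rightarrow> (nat \<times> nat \<Rightarrow> complex)" where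
  "symbol p P = (\<lambda>ij. if Lam p ij = delta p P then P ij else 0)"

text \<open>Coefficients of (xi^p + chi^2)^2 = xi^(2p) + 2 chi^2 xi^p + chi^4.\<close>
definition target_symbol :: "nat \<Rightarrow> (nat \<times> nat \<Rightarrow> complex)" where
  "target_symbol p = (\<lambda>ij. if ij = (0, 2 * p) then 1
                          else if ij = (2, p) then 2
                          else if ij = (4, 0) then 1 else 0)"

end

theory Submission
  imports Defs
begin

lemma sum_single:
  assumes "finite S" "\<And>x. x \<in> S \<Longrightarrow> x \<noteq> x0 \<Longrightarrow> g x = 0" "x0 \<notin> S \<Longrightarrow> g x0 = 0"
  shows "sum g S = g x0"
proof (cases "x0 \<in> S")
  case True
  then have "sum g S = g x0 + sum g (S - {x0})" using assms(1) by (simp add: sum.remove)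
  moreover have "sum g (S - {x0}) = 0" using assms(2) by (intro sum.neutral) auto
  ultimately show ?thesis by simp
next
  case False
  then have "sum g S = 0" using assms(2) by (intro sum.neutral) auto
  then show ?thesis using False assms(3) by simp
qed

lemma inner_sum:
  fixes P Q :: weyl
  assumes p: "p > 0" and bi: "Lam p ij \<le> dP" and bk: "Lam p kl \<le> dQ"
    and w: "p * a + 2 * b + p + 2 = dP + dQ"
  shows "(\<Sum>t \<in> {..min (snd ij) (fst kl)}.
         (if fst ij + fst kl - t = a \<and> snd ij + snd kl - t = b
          then P ij * Q kl * of_nat (snd ij choose t) * of_nat (fst kl choose t) * of_nat (fact t) else 0))
   = (if fst ij + fst kl = a \<and> snd ij + snd kl = b then P ij * Q kl else 0)
   + (if Lam p ij = dP \<and> Lam p kl = dQ \<and> fst ij + fst kl = a + 1 \<and> snd ij + snd kl = b + 1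
      then of_nat (snd ij) * of_nat (fst kl) * P ij * Q kl else 0)"
proof -
  obtain i j where ij: "ij = (i,j)" by fastforce
  obtain k l where kl: "kl = (k,l)" by fastforce
  have bi': "p*i + 2*j \<le> dP" and bk': "p*k+2*l \<le> dQ" using bi bk ij kl by (auto simp: Lam_def)
  define f where "f t = (if i + k - t = a \<and> j + l - t = b
          then P (i,j) * Q (k,l) * of_nat (j choose t) * of_nat (k choose t) * of_nat (fact t) else (0::complex))" for t
  have f2: "f t = 0" if "t \<in> {..min j k}" "t \<ge> 2" for t
  proof (rule ccontr)
    assume "f t \<noteq> 0"
    then have c: "i + k - t = a" "j + l - t = b" unfolding f_def by (auto split: if_splits)
    have "t \<le> k" "t \<le> j" using that by auto
    then have "i + k = a + t" "j + l = b + t" using c by auto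
    then have e1: "p*(i+k) = p*(a+t)" "2*(j+l) = 2*(b+t)" by simp_all
    then have "p*i + p*k + 2*j + 2*l = p*a + 2*b + p*t + 2*t" unfolding distrib_left by linarith
    moreover have "p*t \<ge> p*2" using that(2) by (rule mult_le_mono2)
    ultimately show False using bi' bk' w that(2) by linarith
  qed
  have f0: "f 0 = (if i + k = a \<and> j + l = b then P (i,j) * Q (k,l) else 0)"
    by (simp add: f_def)
  have f1: "f 1 = (if Lam p (i,j) = dP \<and> Lam p (k,l) = dQ \<and> i + k = a + 1 \<and> j + l = b + 1
      then of_nat j * of_nat k * P (i,j) * Q (k,l) else 0)" if "1 \<le> j" "1 \<le> k"
  proof -
    have e: "(i + k - 1 = a \<and> j + l - 1 = b) = (i + k = a + 1 \<and> j + l = b + 1)" using that by auto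
    have "i + k = a + 1 \<and> j + l = b + 1 \<Longrightarrow> Lam p (i,j) = dP \<and> Lam p (k,l) = dQ"
    proof -
      assume h: "i + k = a + 1 \<and> j + l = b + 1"
      then have "p*(i+k) + 2*(j+l) = p*a + 2*b + p + 2" by (simp add: algebra_simps)
      then show ?thesis using bi' bk' w by (simp add: Lam_def algebra_simps)
    qed
    then show ?thesis unfolding f_def using e by (auto simp: algebra_simps)
  qed
  have main: "(\<Sum>t \<in> {..min j k}. f t) = f 0 + (if Lam p (i,j) = dP \<and> Lam p (k,l) = dQ \<and> i + k = a + 1 \<and> j + l = b + 1
      then of_nat j * of_nat k * P (i,j) * Q (k,l) else 0)"
  proof (cases "min j k = 0")
    case True
    then show ?thesis by auto
  next
    case False
    then have s: "{0,1} \<subseteq> {..min j k}" by auto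
    have "(\<Sum>t \<in> {..min j k}. f t) = (\<Sum>t \<in> {0,1}. f t)"
      using f2 s by (intro sum.mono_neutral_right) auto
    also have "\<dots> = f 0 + f 1" by simp
    finally show ?thesis using f1 False by simp
  qed
  then have "(\<Sum>t \<in> {..min j k}. f t) = (if i + k = a \<and> j + l = b then P (i,j) * Q (k,l) else 0) + (if Lam p (i,j) = dP \<and> Lam p (k,l) = dQ \<and> i + k = a + 1 \<and> j + l = b + 1
      then of_nat j * of_nat k * P (i,j) * Q (k,l) else 0)" unfolding f0 .
  then show ?thesis unfolding ij kl fst_conv snd_conv f_def .
qed

lemma mult_nested:
  "weyl_mult P Q (a,b) = (\<Sum>ij\<in>wsupp P. \<Sum>kl\<in>wsupp Q. \<Sum>t \<in> {..min (snd ij) (fst kl)}.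
         (if fst ij + fst kl - t = a \<and> snd ij + snd kl - t = b
          then P ij * Q kl * of_nat (snd ij choose t) * of_nat (fst kl choose t) * of_nat (fact t) else 0))"
  unfolding weyl_mult_def by (simp add: sum.cartesian_product)

lemma comm_coeff:
  fixes P Q :: weyl
  assumes p: "p > 0"
   and bP: "\<And>ij. ij \<in> wsupp P \<Longrightarrow> Lam p ij \<le> dP"
   and bQ: "\<And>ij. ij \<in> wsupp Q \<Longrightarrow> Lam p ij \<le> dQ"
   and w: "p * a + 2*b + p + 2 = dP + dQ"
  shows "weyl_mult P Q (a,b) - weyl_mult Q P (a,b) =
    (\<Sum>ij\<in>wsupp P. \<Sum>kl\<in>wsupp Q. if Lam p ij = dP \<and> Lam p kl = dQ \<and> fst ij + fst kl = a+1 \<and> snd ij + snd kl = b+1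
       then (of_nat (snd ij) * of_nat (fst kl) - of_nat (snd kl) * of_nat (fst ij)) * P ij * Q kl else 0)"
proof -
  have w': "p * a + 2*b + p + 2 = dQ + dP" using w by simp
  have e1: "weyl_mult P Q (a,b) = (\<Sum>ij\<in>wsupp P. \<Sum>kl\<in>wsupp Q.
     (if fst ij + fst kl = a \<and> snd ij + snd kl = b then P ij * Q kl else 0)
   + (if Lam p ij = dP \<and> Lam p kl = dQ \<and> fst ij + fst kl = a + 1 \<and> snd ij + snd kl = b + 1
      then of_nat (snd ij) * of_nat (fst kl) * P ij * Q kl else 0))"
    unfolding mult_nested
    by (intro sum.cong refl inner_sum[OF p _ _ w] bP bQ) auto
  have e2: "weyl_mult Q P (a,b) = (\<Sum>kl\<in>wsupp Q. \<Sum>ij\<in>wsupp P.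
     (if fst kl + fst ij = a \<and> snd kl + snd ij = b then Q kl * P ij else 0)
   + (if Lam p kl = dQ \<and> Lam p ij = dP \<and> fst kl + fst ij = a + 1 \<and> snd kl + snd ij = b + 1
      then of_nat (snd kl) * of_nat (fst ij) * Q kl * P ij else 0))"
    unfolding mult_nested
    by (intro sum.cong refl inner_sum[OF p _ _ w'] bP bQ) auto
  also have "\<dots> = (\<Sum>ij\<in>wsupp P. \<Sum>kl\<in>wsupp Q.
     (if fst ij + fst kl = a \<and> snd ij + snd kl = b then P ij * Q kl else 0)
   + (if Lam p ij = dP \<and> Lam p kl = dQ \<and> fst ij + fst kl = a + 1 \<and> snd ij + snd kl = b + 1
      then of_nat (snd kl) * of_nat (fst ij) * P ij * Q kl else 0))"
    by (subst sum.swap) (intro sum.cong refl, auto simp: add.commute mult.commute mult.left_commute)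
  finally have e2': "weyl_mult Q P (a,b) = \<dots>" .
  show ?thesis unfolding e1 e2' sum_subtractf[symmetric]
    by (intro sum.cong refl) (auto simp: algebra_simps)
qed

theorem mainTheorem6:
  fixes p :: nat and L M :: weyl
  assumes "p > 0"
    and "weyl_elem L" and "L \<noteq> (\<lambda>_. 0)"
    and "symbol p L = target_symbol p"
    and "weyl_elem M" and "M \<noteq> (\<lambda>_. 0)"
    and "weyl_mult L M = weyl_mult M L"
  shows "ord M mod (2 * p) = 0 \<or> ord M mod (2 * p) = p"
proof -
  note p = assms(1)
  have finL: "finite (wsupp L)" using assms(2) weyl_elem_def by auto
  have finM: "finite (wsupp M)" using assms(5) weyl_elem_def by auto
  have sL: "symbol p L (0,2*p) = 1" using assms(4) by (simp add: target_symbol_def)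
  then have dL: "delta p L = 4*p" by (auto simp: symbol_def Lam_def split: if_splits)
  have Ltop: "L ij = target_symbol p ij" if "Lam p ij = 4*p" for ij
    using fun_cong[OF assms(4), of ij] that dL by (simp add: symbol_def)
  have Lbound: "Lam p ij \<le> 4*p" if "ij \<in> wsupp L" for ij
    using that finL dL unfolding delta_def by (metis Max_ge finite_imageI image_eqI)
  define D where "D = delta p M"
  have Mbound: "Lam p kl \<le> D" if "kl \<in> wsupp M" for kl
    using that finM unfolding D_def delta_def by (metis Max_ge finite_imageI image_eqI)
  have Mne: "wsupp M \<noteq> {}" using assms(6) by (auto simp: wsupp_def)
  have "D \<in> Lam p ` wsupp M" unfolding D_def delta_def using finM Mne by (intro Max_in) auto
  then obtain k0 l0 where k0: "(k0,l0) \<in> wsupp M" "Lam p (k0,l0) = D" by auto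
  define Y where "Y a b ij = (let kl = (a + 1 - fst ij, b + 1 - snd ij) in
     if Lam p ij = 4*p \<and> Lam p kl = D \<and> fst ij + fst kl = a+1 \<and> snd ij + snd kl = b+1
       then (of_nat (snd ij) * of_nat (fst kl) - of_nat (snd kl) * of_nat (fst ij)) * target_symbol p ij * M kl else (0::complex))" for a b ij
  have pts: "(0,2*p) \<in> wsupp L" "(2,p) \<in> wsupp L" "(4,0) \<in> wsupp L"
    using Ltop[of "(0,2*p)"] Ltop[of "(2,p)"] Ltop[of "(4,0)"] p
    by (auto simp: wsupp_def Lam_def target_symbol_def)
  have key: "Y a b (0,2*p) + Y a b (2,p) + Y a b (4,0) = 0"
    if w: "p * a + 2*b + p + 2 = 4*p + D" for a b
  proof -
    have "0 = weyl_mult L M (a,b) - weyl_mult M L (a,b)" using assms(7) by simp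
    also have "\<dots> = (\<Sum>ij\<in>wsupp L. \<Sum>kl\<in>wsupp M. if Lam p ij = 4*p \<and> Lam p kl = D \<and> fst ij + fst kl = a+1 \<and> snd ij + snd kl = b+1
       then (of_nat (snd ij) * of_nat (fst kl) - of_nat (snd kl) * of_nat (fst ij)) * target_symbol p ij * M kl else 0)"
      apply (subst comm_coeff[OF p _ _ w])
        apply (erule Lbound) apply (erule Mbound)
      by (intro sum.cong refl) (auto simp: Ltop)
    also have "\<dots> = (\<Sum>ij\<in>wsupp L. Y a b ij)"
    proof (intro sum.cong refl)
      fix ij assume "ij \<in> wsupp L"
      show "(\<Sum>kl\<in>wsupp M. if Lam p ij = 4*p \<and> Lam p kl = D \<and> fst ij + fst kl = a+1 \<and> snd ij + snd kl = b+1
       then (of_nat (snd ij) * of_nat (fst kl) - of_nat (snd kl) * of_nat (fst ij)) * target_symbol p ij * M kl else 0) = Y a b ij"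
        unfolding Y_def Let_def
        by (rule sum_single[OF finM]) (auto simp: wsupp_def)
    qed
    also have "\<dots> = (\<Sum>ij\<in>{(0,2*p),(2,p),(4,0)}. Y a b ij)"
      using pts finL
      by (intro sum.mono_neutral_right) (auto simp: Y_def Let_def target_symbol_def)
    also have "\<dots> = Y a b (0,2*p) + Y a b (2,p) + Y a b (4,0)"
      using p by simp
    finally show ?thesis by simp
  qed
  have Y1: "Y a b (0,2*p) = (if Lam p (a+1, b+1-2*p) = D \<and> 2*p \<le> b+1 then of_nat (2*p) * of_nat (a+1) * M (a+1, b+1-2*p) else 0)" for a b
    unfolding Y_def Let_def using p by (auto simp: target_symbol_def Lam_def)
  have Y2: "Y a b (2,p) = (if Lam p (a-1, b+1-p) = D \<and> 1 \<le> a \<and> p \<le> b+1 then (of_nat p * of_nat (a-1) - of_nat (b+1-p) * 2) * 2 * M (a-1,b+1-p) else 0)" for a b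
    unfolding Y_def Let_def using p by (auto simp: target_symbol_def Lam_def)
  have Y3: "Y a b (4,0) = (if Lam p (a-3, b+1) = D \<and> 3 \<le> a then - (of_nat (b+1) * 4) * M (a-3, b+1) else 0)" for a b
    unfolding Y_def Let_def using p by (auto simp: target_symbol_def Lam_def)
  have C1: "\<forall>l. p*k + 2*l = D \<longrightarrow> M (k,l) = 0" if "odd k \<or> (\<forall>l. 2*l = D \<longrightarrow> M (0,l) = 0)" for k
    using that
  proof (induction k rule: less_induct)
    case (less k)
    show ?case
    proof (intro allI impI)
      fix l assume kl: "p*k + 2*l = D"
      show "M (k,l) = 0"
      proof (cases "k = 0")
        case True then show ?thesis using less.prems kl by auto
      next
        case False
        then obtain a where ak: "k = a + 1" by (cases k) auto
        define b where "b = l + 2*p - 1"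
        have bl: "b + 1 = l + 2*p" using p b_def by simp
        have "p*k = p*a + p" using ak by simp
        then have w: "p*a + 2*b + p + 2 = 4*p + D" using kl bl by linarith
        have bl2: "b + 1 - 2*p = l" using bl by simp
        have y1: "Y a b (0,2*p) = of_nat (2*p) * of_nat k * M (k,l)"
          using Y1[of a b] ak bl kl by (simp add: bl2 Lam_def)
        have y2: "Y a b (2,p) = 0"
        proof -
          have "M (a-1, b+1-p) = 0" if c: "Lam p (a-1, b+1-p) = D" "1 \<le> a"
          proof -
            from c(2) obtain a' where a': "a = Suc a'" by (cases a) auto
            have lt: "a - 1 < k" using ak by simp
            have par: "odd (a-1) \<or> (\<forall>l. 2*l = D \<longrightarrow> M (0,l) = 0)" using less.prems ak a' by auto
            have "p*(a-1) + 2*(b+1-p) = D" using c by (simp add: Lam_def)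
            then show ?thesis using less.IH[OF lt par] by blast
          qed
          then show ?thesis using Y2[of a b] by auto
        qed
        have y3: "Y a b (4,0) = 0"
        proof -
          have "M (a-3, b+1) = 0" if c: "Lam p (a-3, b+1) = D" "3 \<le> a"
          proof -
            from c(2) obtain a' where a': "a = a' + 3" by (metis le_add_diff_inverse2)
            have lt: "a - 3 < k" using ak by simp
            have par: "odd (a-3) \<or> (\<forall>l. 2*l = D \<longrightarrow> M (0,l) = 0)" using less.prems ak a' by auto
            have "p*(a-3) + 2*(b+1) = D" using c by (simp add: Lam_def)
            then show ?thesis using less.IH[OF lt par] by blast
          qed
          then show ?thesis using Y3[of a b] by auto
        qed
        have "of_nat (2*p) * of_nat k * M (k,l) = 0" using key[OF w] y1 y2 y3 by simp
        then show ?thesis using p False by simp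
      qed
    qed
  qed
  have top0: "\<exists>l. 2*l = D \<and> M (0,l) \<noteq> 0"
  proof (rule ccontr)
    assume "\<not> ?thesis"
    then have "\<forall>l. 2*l = D \<longrightarrow> M (0,l) = 0" by auto
    then have "M (k0,l0) = 0" using C1[of k0] k0(2) by (auto simp: Lam_def)
    then show False using k0(1) by (simp add: wsupp_def)
  qed
  then obtain lz where lz: "2*lz = D" "M (0,lz) \<noteq> 0" by auto
  define S where "S = {k. \<exists>l. p*k + 2*l = D \<and> M (k,l) \<noteq> 0}"
  have Ssub: "S \<subseteq> fst ` wsupp M" unfolding S_def wsupp_def by force
  have finS: "finite S" using finite_subset[OF Ssub] finM by auto
  have S0: "0 \<in> S" using lz unfolding S_def by auto
  define A where "A = Max S"
  have "A \<in> S" unfolding A_def using finS S0 by (intro Max_in) auto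
  then obtain lA where lA: "p*A + 2*lA = D" "M (A,lA) \<noteq> 0" unfolding S_def by auto
  have Amax: "M (k,l) = 0" if "p*k + 2*l = D" "k > A" for k l
  proof (rule ccontr)
    assume "M (k,l) \<noteq> 0"
    then have "k \<in> S" using that unfolding S_def by auto
    then have "k \<le> A" unfolding A_def using finS by simp
    then show False using that by simp
  qed
  have lA0: "lA = 0"
  proof (rule ccontr)
    assume "lA \<noteq> 0"
    define a where "a = A + 3"
    define b where "b = lA - 1"
    have bl: "b + 1 = lA" using \<open>lA \<noteq> 0\<close> b_def by simp
    have "p*a = p*A + 3*p" unfolding a_def by (simp add: algebra_simps)
    then have w: "p*a + 2*b + p + 2 = 4*p + D" using lA bl by linarith
    have y1: "Y a b (0,2*p) = 0"
    proof -
      have "M (a+1, b+1-2*p) = 0" if c: "Lam p (a+1, b+1-2*p) = D"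
        using c by (intro Amax) (auto simp: Lam_def a_def)
      then show ?thesis using Y1[of a b] by auto
    qed
    have y2: "Y a b (2,p) = 0"
    proof -
      have "M (a-1, b+1-p) = 0" if c: "Lam p (a-1, b+1-p) = D"
        using c by (intro Amax) (auto simp: Lam_def a_def)
      then show ?thesis using Y2[of a b] by auto
    qed
    have lAb: "lA = Suc b" using bl by simp
    have y3: "Y a b (4,0) = - (of_nat (Suc b) * 4) * M (A, Suc b)"
      using Y3[of a b] lA unfolding lAb by (simp add: a_def Lam_def)
    have "- (of_nat (Suc b) * 4) * M (A, Suc b) = 0" using key[OF w] y1 y2 y3 by simp
    then have "M (A, lA) = 0" unfolding lAb by (simp del: of_nat_Suc)
    then show False using lA(2) by simp
  qed
  have evA: "even A"
  proof (rule ccontr)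
    assume "odd A"
    then have "M (A,lA) = 0" using C1[of A] lA(1) by auto
    then show False using lA(2) by simp
  qed
  then obtain m where m: "A = 2*m" by auto
  have Dm: "D = 2*(p*m)" using lA lA0 m by simp
  then have lzm: "lz = p*m" using lz(1) by simp
  have ordM: "ord M = p*m"
    unfolding ord_def
  proof (rule Max_eqI)
    show "finite (snd ` wsupp M)" using finM by simp
    show "p*m \<in> snd ` wsupp M" using lz(2) lzm by (force simp: wsupp_def)
    fix y assume "y \<in> snd ` wsupp M"
    then obtain i where "(i,y) \<in> wsupp M" by auto
    then have "p*i + 2*y \<le> D" using Mbound by (fastforce simp: Lam_def)
    then show "y \<le> p*m" using Dm by linarith
  qed
  show ?thesis
  proof (cases "even m")
    case True
    then obtain q where "m = 2*q" by auto
    then have "p*m = (2*p)*q" by simp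
    then show ?thesis using ordM True by simp
  next
    case False
    then obtain q where "m = 2*q + 1" using oddE by blast
    then have "p*m = p + (2*p)*q" by (simp add: algebra_simps)
    then show ?thesis using ordM p False by simp
  qed
qed

end
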